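(* Let $L\subseteq\Sigma^\omega$ be a prefix-independent language recognised by some deterministic coBüchi automaton. Let $\mathcal{A}_{\min}$ be a nice, safe minimal and safe centralised history-deterministic coBüchi automaton recognising $L$, with safe components $\mathcal{S}_1,\dots,\mathcal{S}_k$ (with state sets $S_i$ and transition sets $\Delta_i$), and let $n_{\max}=\max_{1\le i\le k}|S_i|$. Let $Q=\{p_1,\dots,p_{n_{\max}}\}$ and, for each $i$, let $\phi_i:S_i\to Q$ be any injective map; extend it to transitions by $\phi_i(q,a,q')=(\phi_i(q),a,\phi_i(q'))$. Let $\mathcal{A}_{\mathrm{PI}}$ be the generalised coBüchi automaton with states $Q$, initial state $p_1$, transitions $\Delta=Q\times\Sigma\times Q$, colours $\{1,\dots,k\}$, and labelling $\mathrm{col}(e)=\{i\in\{1,\dots,k\} : \text{there is no } e'\in\Delta_i \text{ with } \phi_i(e')=e\}$. Then $\mathcal{A}_{\mathrm{PI}}$ is history-deterministic and $\mathcal{L}(\mathcal{A}_{\mathrm{PI}})=L$.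
   Context: An automaton is a tuple $(Q,\Sigma,q_{\mathrm{init}},\Delta,\Gamma,\mathrm{col},W)$ with finite state set, finite input alphabet $\Sigma$, initial state, transitions $\Delta\subseteq Q\times\Sigma\times Q$, output alphabet $\Gamma$, labelling $\mathrm{col}:\Delta\to\Gamma$, acceptance condition $W\subseteq\Gamma^\omega$. A run on $w=a_1a_2\cdots$ is a sequence $(q_0,a_1,q_1)(q_1,a_2,q_2)\cdots$ of transitions with $q_0=q_{\mathrm{init}}$, accepting if its label sequence is in $W$; $\mathcal{L}(\mathcal{A})$ is the set of words with an accepting run. With a finite colour set $C$ and $\Gamma=2^C$, generalised coBüchi means $W=\{x : \text{some } c\in C \text{ occurs in only finitely many letters of } x\}$; a coBüchi automaton is the case $C=\{1\}$, and its coBüchi transitions are those labelled $\{1\}$. A resolver is a map $\sigma:\Sigma^+\to\Delta$ such that for every $w=a_0a_1\cdots$, $\sigma(a_0)\sigma(a_0a_1)\cdots$ is a run on $w$, accepting whenever $w\in\mathcal{L}(\mathcal{A})$; history-deterministic means a resolver exists. $L$ is prefix-independent if for all $u\in\Sigma^*$, $w\in\Sigma^\omega$: $uw\in L\iff w\in L$. For a coBüchi automaton $\mathcal{A}$: $\mathcal{A}_{\mathrm{safe}}$ is obtained by deleting all coBüchi transitions; a safe component is a strongly connected component of $\mathcal{A}_{\mathrm{safe}}$ (a maximal set of states mutually reachable in $\mathcal{A}_{\mathrm{safe}}$, together with the transitions of $\mathcal{A}_{\mathrm{safe}}$ between them); the safe language of a state $q$ is the set of $w\in\Sigma^\omega$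 having an infinite path from $q$ in $\mathcal{A}_{\mathrm{safe}}$; two states are equivalent if the automaton started from each of them recognises the same language. $\mathcal{A}$ is semantically deterministic if whenever $(q,a,p_1),(q,a,p_2)\in\Delta$, $p_1$ and $p_2$ are equivalent; in normal form if every transition between two different safe components is a coBüchi transition; safe deterministic if $\mathcal{A}_{\mathrm{safe}}$ is deterministic; nice if all states are reachable from the initial state and it is semantically deterministic, in normal form and safe deterministic. It is safe centralised if any two equivalent states whose safe languages are comparable under inclusion lie in the same safe component, and safe minimal if any two equivalent states with equal safe languages are equal. *)

theory Defs
  imports Main "HOL-Library.Omega_Words_Fun"
begin

text \<open>The input alphabet Sig is passed as a separate parameter.\<close>

record ('q, 'a, 'c) aut =
  states :: "'q set"
  init   :: 'q
  trans  :: "('q \<times> 'a \<times> 'q) set"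
  col    :: "'q \<times> 'a \<times> 'q \<Rightarrow> 'c"
  acc    :: "'c word set"

definition wf_aut :: "'a set \<Rightarrow> ('q, 'a, 'c) aut \<Rightarrow> bool" where
  "wf_aut Sig A \<longleftrightarrow> finite Sig \<and> finite (states A) \<and> init A \<in> states A
     \<and> trans A \<subseteq> states A \<times> Sig \<times> states A"

definition omega_words :: "'a set \<Rightarrow> 'a word set" where
  "omega_words Sig = {w. \<forall>i. w i \<in> Sig}"

definition is_path :: "('q \<times> 'a \<times> 'q) set \<Rightarrow> 'q \<Rightarrow> 'a word \<Rightarrow> ('q \<times> 'a \<times> 'q) word \<Rightarrow> bool" where
  "is_path T q w r \<longleftrightarrow> fst (r 0) = q \<and>
     (\<forall>i. r i \<in> T \<and> fst (snd (r i)) = w i \<and> snd (snd (r i)) = fst (r (Suc i)))"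

definition is_run :: "('q, 'a, 'c) aut \<Rightarrow> 'a word \<Rightarrow> ('q \<times> 'a \<times> 'q) word \<Rightarrow> bool" where
  "is_run A w r \<longleftrightarrow> is_path (trans A) (init A) w r"

definition accepting :: "('q, 'a, 'c) aut \<Rightarrow> ('q \<times> 'a \<times> 'q) word \<Rightarrow> bool" where
  "accepting A r \<longleftrightarrow> (col A \<circ> r) \<in> acc A"

definition lang :: "'a set \<Rightarrow> ('q, 'a, 'c) aut \<Rightarrow> 'a word set" where
  "lang Sig A = {w \<in> omega_words Sig. \<exists>r. is_run A w r \<and> accepting A r}"

definition is_resolver :: "'a set \<Rightarrow> ('q, 'a, 'c) aut \<Rightarrow> ('a list \<Rightarrow> 'q \<times> 'a \<times> 'q) \<Rightarrow> bool" where
  "is_resolver Sig A \<sigma> \<longleftrightarrow> (\<forall>w \<in> omega_words Sig.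
      is_run A w (\<lambda>i. \<sigma> (prefix (Suc i) w)) \<and>
      (w \<in> lang Sig A \<longrightarrow> accepting A (\<lambda>i. \<sigma> (prefix (Suc i) w))))"

definition history_deterministic :: "'a set \<Rightarrow> ('q, 'a, 'c) aut \<Rightarrow> bool" where
  "history_deterministic Sig A \<longleftrightarrow> (\<exists>\<sigma>. is_resolver Sig A \<sigma>)"

definition prefix_independent :: "'a set \<Rightarrow> 'a word set \<Rightarrow> bool" where
  "prefix_independent Sig L \<longleftrightarrow>
     (\<forall>u \<in> lists Sig. \<forall>w \<in> omega_words Sig. (u \<frown> w \<in> L \<longleftrightarrow> w \<in> L))"

definition deterministic_trans :: "('q \<times> 'a \<times> 'q) set \<Rightarrow> bool" where
  "deterministic_trans T \<longleftrightarrow> (\<forall>q a p1 p2. (q, a, p1) \<in> T \<and> (q, a, p2) \<in> T \<longrightarrow> p1 = p2)"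

definition deterministic :: "('q, 'a, 'c) aut \<Rightarrow> bool" where
  "deterministic A \<longleftrightarrow> deterministic_trans (trans A)"

definition gen_coBuchi :: "'k set \<Rightarrow> 'k set word set" where
  "gen_coBuchi C = {x. \<exists>c \<in> C. finite {i. c \<in> x i}}"

definition coBuchi_aut :: "('q, 'a, nat set) aut \<Rightarrow> bool" where
  "coBuchi_aut A \<longleftrightarrow> acc A = gen_coBuchi {1::nat} \<and> (\<forall>e \<in> trans A. col A e \<subseteq> {1})"

definition safe_trans :: "('q, 'a, nat set) aut \<Rightarrow> ('q \<times> 'a \<times> 'q) set" where
  "safe_trans A = {e \<in> trans A. col A e \<noteq> {1}}"

definition safe_rel :: "('q, 'a, nat set) aut \<Rightarrow> ('q \<times> 'q) set" where
  "safe_rel A = {(q, p). \<exists>a. (q, a, p) \<in> safe_trans A}"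

definition same_safe_comp :: "('q, 'a, nat set) aut \<Rightarrow> 'q \<Rightarrow> 'q \<Rightarrow> bool" where
  "same_safe_comp A q p \<longleftrightarrow> q \<in> states A \<and> p \<in> states A \<and>
     (q, p) \<in> (safe_rel A)\<^sup>* \<and> (p, q) \<in> (safe_rel A)\<^sup>*"

definition safe_component :: "('q, 'a, nat set) aut \<Rightarrow> 'q set \<Rightarrow> bool" where
  "safe_component A S \<longleftrightarrow> (\<exists>q \<in> states A. S = {p. same_safe_comp A q p})"

definition comp_trans :: "('q, 'a, nat set) aut \<Rightarrow> 'q set \<Rightarrow> ('q \<times> 'a \<times> 'q) set" where
  "comp_trans A S = {(q, a, p) \<in> safe_trans A. q \<in> S \<and> p \<in> S}"

definition safe_lang :: "'a set \<Rightarrow> ('q, 'a, nat set) aut \<Rightarrow> 'q \<Rightarrow> 'a word set" where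
  "safe_lang Sig A q = {w \<in> omega_words Sig. \<exists>r. is_path (safe_trans A) q w r}"

definition lang_from :: "'a set \<Rightarrow> ('q, 'a, 'c) aut \<Rightarrow> 'q \<Rightarrow> 'a word set" where
  "lang_from Sig A q = lang Sig (A\<lparr>init := q\<rparr>)"

definition equiv_states :: "'a set \<Rightarrow> ('q, 'a, 'c) aut \<Rightarrow> 'q \<Rightarrow> 'q \<Rightarrow> bool" where
  "equiv_states Sig A q p \<longleftrightarrow> lang_from Sig A q = lang_from Sig A p"

definition all_reachable :: "('q, 'a, 'c) aut \<Rightarrow> bool" where
  "all_reachable A \<longleftrightarrow> (\<forall>q \<in> states A. (init A, q) \<in> {(q, p). \<exists>a. (q, a, p) \<in> trans A}\<^sup>*)"

definition semantically_deterministic :: "'a set \<Rightarrow> ('q, 'a, 'c) aut \<Rightarrow> bool" where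
  "semantically_deterministic Sig A \<longleftrightarrow>
     (\<forall>q a p1 p2. (q, a, p1) \<in> trans A \<and> (q, a, p2) \<in> trans A \<longrightarrow> equiv_states Sig A p1 p2)"

definition normal_form :: "('q, 'a, nat set) aut \<Rightarrow> bool" where
  "normal_form A \<longleftrightarrow> (\<forall>q a p. (q, a, p) \<in> trans A \<and> \<not> same_safe_comp A q p \<longrightarrow> col A (q, a, p) = {1})"

definition safe_deterministic :: "('q, 'a, nat set) aut \<Rightarrow> bool" where
  "safe_deterministic A \<longleftrightarrow> deterministic_trans (safe_trans A)"

definition nice :: "'a set \<Rightarrow> ('q, 'a, nat set) aut \<Rightarrow> bool" where
  "nice Sig A \<longleftrightarrow> all_reachable A \<and> semantically_deterministic Sig A \<and> normal_form A
     \<and> safe_deterministic A"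

definition safe_centralised :: "'a set \<Rightarrow> ('q, 'a, nat set) aut \<Rightarrow> bool" where
  "safe_centralised Sig A \<longleftrightarrow> (\<forall>q \<in> states A. \<forall>p \<in> states A.
     equiv_states Sig A q p \<and> (safe_lang Sig A q \<subseteq> safe_lang Sig A p \<or> safe_lang Sig A p \<subseteq> safe_lang Sig A q)
     \<longrightarrow> same_safe_comp A q p)"

definition safe_minimal :: "'a set \<Rightarrow> ('q, 'a, nat set) aut \<Rightarrow> bool" where
  "safe_minimal Sig A \<longleftrightarrow> (\<forall>q \<in> states A. \<forall>p \<in> states A.
     equiv_states Sig A q p \<and> safe_lang Sig A q = safe_lang Sig A p \<longrightarrow> q = p)"

text \<open>States Q = {1..nmax} (p_j is j), initial state 1, all transitions,
  colours {1..k}; S i is the i-th safe component of A, phi i the injection S i -> Q.\<close>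
definition A_PI :: "'a set \<Rightarrow> ('q, 'a, nat set) aut \<Rightarrow> nat \<Rightarrow> nat \<Rightarrow> (nat \<Rightarrow> 'q set)
    \<Rightarrow> (nat \<Rightarrow> 'q \<Rightarrow> nat) \<Rightarrow> (nat, 'a, nat set) aut" where
  "A_PI Sig A k nmax S phi = \<lparr>
     states = {1..nmax},
     init = 1,
     trans = {1..nmax} \<times> Sig \<times> {1..nmax},
     col = (\<lambda>e. {i \<in> {1..k}. \<not> (\<exists>(q, a, q') \<in> comp_trans A (S i). (phi i q, a, phi i q') = e)}),
     acc = gen_coBuchi {1..k} \<rparr>"

end

theory Submission imports Defs begin

lemma finite_shift_Suc:
  assumes "finite {i. P (f i)}"
  shows "finite {i. P ((e ## f) i)}"
proof -
  have "{i. P ((e ## f) i)} \<subseteq> {0} \<union> Suc ` {i. P (f i)}"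
    by (auto, metis build.simps(2) image_iff mem_Collect_eq not0_implies_Suc)
  then show ?thesis using assms finite_subset by blast
qed

lemma prepend_lang:
  assumes coB: "coBuchi_aut A" and wf: "wf_aut Sig A"
  and reach: "(p,q) \<in> {(q, p). \<exists>a. (q, a, p) \<in> trans A}\<^sup>*"
  and v: "v \<in> lang_from Sig A q"
  shows "\<exists>u \<in> lists Sig. u \<frown> v \<in> lang_from Sig A p"
  using reach v
proof (induction rule: converse_rtrancl_induct)
  case base
  then show ?case by (metis conc_empty lists.Nil)
next
  case (step y z)
  then obtain u where u: "u \<in> lists Sig" "u \<frown> v \<in> lang_from Sig A z" by blast
  from step(1) obtain a where a: "(y,a,z) \<in> trans A" by blast
  then have aS: "a \<in> Sig" using wf unfolding wf_aut_def by blast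
  from u(2) obtain r where r: "u \<frown> v \<in> omega_words Sig"
     "is_path (trans A) z (u \<frown> v) r" "(col A \<circ> r) \<in> acc A"
    unfolding lang_from_def lang_def is_run_def accepting_def by auto
  have w: "(a # u) \<frown> v \<in> omega_words Sig"
    unfolding omega_words_def
  proof (intro CollectI allI)
    fix i show "((a # u) \<frown> v) i \<in> Sig"
      using r(1) aS unfolding omega_words_def by (cases i) auto
  qed
  have p: "is_path (trans A) y ((a # u) \<frown> v) ((y,a,z) ## r)"
    unfolding is_path_def
  proof (intro conjI allI)
    show "fst (((y, a, z) ## r) 0) = y" by simp
    fix i
    show "((y, a, z) ## r) i \<in> trans A" using r(2) a unfolding is_path_def by (cases i) auto
    show "fst (snd (((y, a, z) ## r) i)) = ((a # u) \<frown> v) i" using r(2) unfolding is_path_def by (cases i) auto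
    show "snd (snd (((y, a, z) ## r) i)) = fst (((y, a, z) ## r) (Suc i))" using r(2) unfolding is_path_def by (cases i) auto
  qed
  have "finite {i. 1 \<in> col A (r i)}" using r(3) coB unfolding coBuchi_aut_def gen_coBuchi_def by auto
  then have "finite {i. 1 \<in> col A (((y,a,z) ## r) i)}" by (rule finite_shift_Suc)
  then have acc: "(col A \<circ> ((y,a,z) ## r)) \<in> acc A"
    using coB unfolding coBuchi_aut_def gen_coBuchi_def by auto
  show ?case
    using w p acc u(1) aS unfolding lang_from_def lang_def is_run_def accepting_def
    by (intro bexI[of _ "a # u"]) auto
qed

theorem proposition20:
  fixes Sig :: "'a set"
    and L :: "'a word set"
    and D :: "('d, 'a, nat set) aut"
    and Amin :: "('q, 'a, nat set) aut"
    and k :: nat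
    and S :: "nat \<Rightarrow> 'q set"
    and phi :: "nat \<Rightarrow> 'q \<Rightarrow> nat"
  assumes "prefix_independent Sig L"
    and "wf_aut Sig D" "coBuchi_aut D" "deterministic D" "lang Sig D = L"
    and "wf_aut Sig Amin" "coBuchi_aut Amin"
    and "nice Sig Amin" "safe_minimal Sig Amin" "safe_centralised Sig Amin"
    and "history_deterministic Sig Amin" "lang Sig Amin = L"
    and "\<forall>i \<in> {1..k}. safe_component Amin (S i)"
    and "inj_on S {1..k}"
    and "\<forall>C. safe_component Amin C \<longrightarrow> C \<in> S ` {1..k}"
    and "\<forall>i \<in> {1..k}. inj_on (phi i) (S i) \<and> phi i ` S i \<subseteq> {1..Max (card ` S ` {1..k})}"
  shows "history_deterministic Sig (A_PI Sig Amin k (Max (card ` S ` {1..k})) S phi)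
    \<and> lang Sig (A_PI Sig Amin k (Max (card ` S ` {1..k})) S phi) = L"
proof -
  define M where "M = Max (card ` S ` {1..k})"
  define A' where "A' = A_PI Sig Amin k M S phi"
  note PI = assms(1) and wfA = assms(6) and coB = assms(7) and nice = assms(8)
    and hd = assms(11) and langA = assms(12) and comps = assms(13) and injS = assms(14)
    and allc = assms(15) and phis = assms(16)[folded M_def]
  have A'_simps: "states A' = {1..M}" "init A' = 1" "trans A' = {1..M} \<times> Sig \<times> {1..M}"
    "col A' = (\<lambda>e. {i \<in> {1..k}. \<not> (\<exists>(q, a, q') \<in> comp_trans Amin (S i). (phi i q, a, phi i q') = e)})"
    "acc A' = gen_coBuchi {1..k}"
    unfolding A'_def A_PI_def by simp_all
  have trA: "trans Amin \<subseteq> states Amin \<times> Sig \<times> states Amin" using wfA unfolding wf_aut_def by blast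
  have colsub: "e \<in> trans Amin \<Longrightarrow> col Amin e \<subseteq> {1}" for e using coB unfolding coBuchi_aut_def by blast
  have safe_iff: "e \<in> safe_trans Amin \<longleftrightarrow> e \<in> trans Amin \<and> 1 \<notin> col Amin e" for e
    using colsub[of e] unfolding safe_trans_def by auto
  have accA: "acc Amin = gen_coBuchi {1}" using coB unfolding coBuchi_aut_def by blast
  have ssc_refl: "q \<in> states Amin \<Longrightarrow> same_safe_comp Amin q q" for q
    unfolding same_safe_comp_def by simp
  have ssc_sym: "same_safe_comp Amin q p \<Longrightarrow> same_safe_comp Amin p q" for q p
    unfolding same_safe_comp_def by simp
  have ssc_trans: "same_safe_comp Amin q p \<Longrightarrow> same_safe_comp Amin p x \<Longrightarrow> same_safe_comp Amin q x" for q p x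
    unfolding same_safe_comp_def by (meson rtrancl_trans)
  have F1: "\<exists>i\<in>{1..k}. q \<in> S i" if "q \<in> states Amin" for q
  proof -
    have "safe_component Amin {p. same_safe_comp Amin q p}"
      unfolding safe_component_def using that by blast
    then obtain i where "i \<in> {1..k}" "S i = {p. same_safe_comp Amin q p}" using allc by force
    then show ?thesis using ssc_refl[OF that] by blast
  qed
  have Seq: "S i = {p. same_safe_comp Amin q p}" if "i \<in> {1..k}" "q \<in> S i" for i q
  proof -
    have "safe_component Amin (S i)" using comps that(1) by blast
    then obtain q1 where q1: "S i = {p. same_safe_comp Amin q1 p}"
      unfolding safe_component_def by blast
    then have h: "same_safe_comp Amin q1 q" using that(2) by blast
    show ?thesis unfolding q1 using ssc_trans[OF ssc_sym[OF h]] ssc_trans[OF h] by blast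
  qed
  have F2: "i = j" if "i \<in> {1..k}" "j \<in> {1..k}" "q \<in> S i" "q \<in> S j" for i j q
  proof -
    have "S i = S j" using Seq[OF that(1,3)] Seq[OF that(2,4)] by simp
    then show ?thesis using injS that(1,2) by (meson inj_onD)
  qed
  have F3: "p \<in> S i" if "(q, a, p) \<in> safe_trans Amin" "q \<in> S i" "i \<in> {1..k}" for q a p i
  proof -
    have "(q, a, p) \<in> trans Amin" "col Amin (q, a, p) \<noteq> {1}" using that(1) unfolding safe_trans_def by auto
    then have "same_safe_comp Amin q p" using nice unfolding nice_def normal_form_def by blast
    then show ?thesis using Seq[OF that(3,2)] by blast
  qed
  have safe_acc: "col Amin e = {}" if "e \<in> safe_trans Amin" for e
  proof -
    have "col Amin e \<subseteq> {1}" "col Amin e \<noteq> {1}" using that colsub unfolding safe_trans_def by auto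
    then show ?thesis using subset_singletonD by metis
  qed
  have Lsub: "lang Sig A' \<subseteq> L"
  proof
    fix w assume "w \<in> lang Sig A'"
    then obtain r where w: "w \<in> omega_words Sig" and r: "is_run A' w r" "accepting A' r"
      unfolding lang_def by blast
    obtain i where i: "i \<in> {1..k}" "finite {t. i \<in> col A' (r t)}"
      using r(2) unfolding accepting_def A'_simps(5) gen_coBuchi_def by (simp only: mem_Collect_eq comp_apply) blast
    then obtain N where N: "\<forall>t\<ge>N. i \<notin> col A' (r t)"
      by (metis (mono_tags, lifting) finite_nat_set_iff_bounded_le mem_Collect_eq not_less_eq_eq le_trans)
    define P where "P t e \<longleftrightarrow> e \<in> comp_trans Amin (S i) \<and> (phi i (fst e), fst (snd e), phi i (snd (snd e))) = r t" for t e
    have exP: "\<exists>e. P t e" if "t \<ge> N" for t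
    proof -
      have "\<exists>(q, a, q') \<in> comp_trans Amin (S i). (phi i q, a, phi i q') = r t"
        using N that i(1) unfolding A'_simps(4) by simp
      then show ?thesis unfolding P_def by auto
    qed
    define E where "E t = (SOME e. P t e)" for t
    have EP: "P t (E t)" if "t \<ge> N" for t unfolding E_def using exP[OF that] by (rule someI_ex)
    have Ecomp: "E t \<in> safe_trans Amin" "fst (E t) \<in> S i" "snd (snd (E t)) \<in> S i" if "t \<ge> N" for t
      using EP[OF that] unfolding P_def comp_trans_def by auto
    have Eeq: "phi i (fst (E t)) = fst (r t)" "fst (snd (E t)) = fst (snd (r t))"
       "phi i (snd (snd (E t))) = snd (snd (r t))" if "t \<ge> N" for t
      using EP[OF that] unfolding P_def by (metis fst_conv snd_conv)+
    define q0 where "q0 = fst (E N)"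
    have path: "is_path (safe_trans Amin) q0 (suffix N w) (\<lambda>j. E (N + j))"
      unfolding is_path_def
    proof (intro conjI allI)
      show "fst (E (N + 0)) = q0" unfolding q0_def by simp
      fix j
      show "E (N + j) \<in> safe_trans Amin" using Ecomp by simp
      show "fst (snd (E (N + j))) = suffix N w j" using Eeq(2)[of "N+j"] r(1)
        unfolding is_run_def is_path_def by simp
      have "phi i (snd (snd (E (N + j)))) = phi i (fst (E (N + Suc j)))"
        using Eeq(1)[of "N + Suc j"] Eeq(3)[of "N+j"] r(1) unfolding is_run_def is_path_def by simp
      moreover have "snd (snd (E (N + j))) \<in> S i" "fst (E (N + Suc j)) \<in> S i" using Ecomp by auto
      ultimately show "snd (snd (E (N + j))) = fst (E (N + Suc j))"
        using phis i(1) by (meson inj_onD)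
    qed
    have sw: "suffix N w \<in> omega_words Sig" using w unfolding omega_words_def by simp
    have "suffix N w \<in> lang_from Sig Amin q0"
      unfolding lang_from_def lang_def is_run_def accepting_def
    proof (intro CollectI conjI exI[of _ "\<lambda>j. E (N + j)"])
      show "suffix N w \<in> omega_words Sig" by (rule sw)
      show "is_path (aut.trans (Amin\<lparr>init := q0\<rparr>)) (init (Amin\<lparr>init := q0\<rparr>)) (suffix N w) (\<lambda>j. E (N + j))"
        using path unfolding is_path_def safe_trans_def by auto
      have "col Amin (E (N + j)) = {}" for j using safe_acc Ecomp(1)[of "N+j"] by simp
      then show "col (Amin\<lparr>init := q0\<rparr>) \<circ> (\<lambda>j. E (N + j)) \<in> acc (Amin\<lparr>init := q0\<rparr>)"
        using accA unfolding gen_coBuchi_def by simp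
    qed
    moreover have "q0 \<in> states Amin" using Ecomp(1)[of N] trA unfolding q0_def safe_trans_def by auto
    then have "(init Amin, q0) \<in> {(q, p). \<exists>a. (q, a, p) \<in> trans Amin}\<^sup>*"
      using nice unfolding nice_def all_reachable_def by blast
    ultimately obtain u where u: "u \<in> lists Sig" "u \<frown> suffix N w \<in> lang_from Sig Amin (init Amin)"
      using prepend_lang[OF coB wfA] by blast
    then have "u \<frown> suffix N w \<in> L" using langA unfolding lang_from_def by simp
    then have "suffix N w \<in> L" using PI u(1) sw unfolding prefix_independent_def by blast
    moreover have "prefix N w \<in> lists Sig" using w unfolding omega_words_def by auto
    ultimately have "prefix N w \<frown> suffix N w \<in> L" using PI sw unfolding prefix_independent_def by blast
    then show "w \<in> L" using prefix_suffix[of w N] by simp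
  qed
  obtain \<sigma> where \<sigma>: "is_resolver Sig Amin \<sigma>" using hd unfolding history_deterministic_def by blast
  define c where "c q = (SOME i. i \<in> {1..k} \<and> q \<in> S i)" for q
  have cS: "c q \<in> {1..k}" "q \<in> S (c q)" if "q \<in> states Amin" for q
    using someI_ex[OF F1[OF that, unfolded Bex_def]] unfolding c_def by auto
  define \<phi> where "\<phi> q = phi (c q) q" for q
  have \<phi>M: "\<phi> q \<in> {1..M}" if "q \<in> states Amin" for q
    using cS[OF that] phis unfolding \<phi>_def by blast
  have oneM: "(1::nat) \<in> {1..M}"
    using \<phi>M[of "init Amin"] wfA unfolding wf_aut_def by auto
  define \<tau> where "\<tau> xs = (if length xs \<le> 1 then 1 else \<phi> (fst (\<sigma> xs)), fst (snd (\<sigma> xs)), \<phi> (snd (snd (\<sigma> xs))))" for xs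
  have runs: "is_run A' w (\<lambda>t. \<tau> (prefix (Suc t) w))" if w: "w \<in> omega_words Sig" for w
  proof -
    have rho: "is_path (trans Amin) (init Amin) w (\<lambda>t. \<sigma> (prefix (Suc t) w))"
      using \<sigma> w unfolding is_resolver_def is_run_def by blast
    show ?thesis unfolding is_run_def is_path_def A'_simps(1-3)
    proof (intro conjI allI)
      show "fst (\<tau> (prefix (Suc 0) w)) = 1" unfolding \<tau>_def by simp
      fix t
      have tr: "\<sigma> (prefix (Suc t) w) \<in> trans Amin" using rho unfolding is_path_def by blast
      then have "fst (\<sigma> (prefix (Suc t) w)) \<in> states Amin" "snd (snd (\<sigma> (prefix (Suc t) w))) \<in> states Amin"
        "fst (snd (\<sigma> (prefix (Suc t) w))) \<in> Sig"
        using trA by auto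
      then show "\<tau> (prefix (Suc t) w) \<in> {1..M} \<times> Sig \<times> {1..M}"
        unfolding \<tau>_def using \<phi>M oneM by auto
      show "fst (snd (\<tau> (prefix (Suc t) w))) = w t" using rho unfolding \<tau>_def is_path_def by simp
      show "snd (snd (\<tau> (prefix (Suc t) w))) = fst (\<tau> (prefix (Suc (Suc t)) w))"
        using rho unfolding \<tau>_def is_path_def by (simp del: upt_Suc)
    qed
  qed
  have accs: "accepting A' (\<lambda>t. \<tau> (prefix (Suc t) w))" if w: "w \<in> lang Sig Amin" for w
  proof -
    have wo: "w \<in> omega_words Sig" using w unfolding lang_def by blast
    define \<rho> where "\<rho> t = \<sigma> (prefix (Suc t) w)" for t
    have rho: "is_path (trans Amin) (init Amin) w \<rho>" "accepting Amin \<rho>"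
      using \<sigma> wo w unfolding is_resolver_def is_run_def \<rho>_def by blast+
    have "finite {t. 1 \<in> col Amin (\<rho> t)}" using rho(2) accA unfolding accepting_def gen_coBuchi_def by auto
    then obtain N where N: "\<forall>t\<ge>N. 1 \<notin> col Amin (\<rho> t)"
      by (metis (mono_tags, lifting) finite_nat_set_iff_bounded_le mem_Collect_eq not_less_eq_eq le_trans)
    have rtr: "\<rho> t \<in> trans Amin" for t using rho(1) unfolding is_path_def by blast
    have rsafe: "\<rho> t \<in> safe_trans Amin" if "t \<ge> N" for t using N that rtr safe_iff by blast
    have rst: "fst (\<rho> t) \<in> states Amin" for t using rtr[of t] trA by auto
    have rcon: "snd (snd (\<rho> t)) = fst (\<rho> (Suc t))" "fst (snd (\<rho> t)) = w t" for t
      using rho(1) unfolding is_path_def by auto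
    define i where "i = c (fst (\<rho> (Suc N)))"
    have inv: "fst (\<rho> t) \<in> S i \<and> c (fst (\<rho> t)) = i" if "Suc N \<le> t" for t
      using that
    proof (induction t rule: dec_induct)
      case base
      then show ?case using cS[OF rst] unfolding i_def by simp
    next
      case (step t)
      have "\<rho> t = (fst (\<rho> t), fst (snd (\<rho> t)), snd (snd (\<rho> t)))" by simp
      then have "(fst (\<rho> t), w t, fst (\<rho> (Suc t))) \<in> safe_trans Amin"
        using rsafe[of t] step(1) rcon[of t] by simp
      moreover have iK: "i \<in> {1..k}" using cS[OF rst] step(3) by metis
      ultimately have "fst (\<rho> (Suc t)) \<in> S i" using F3 step(3) by blast
      then show ?case using F2[OF iK cS(1)[OF rst] _ cS(2)[OF rst]] by metis
    qed
    have iK: "i \<in> {1..k}" unfolding i_def using cS[OF rst] by simp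
    have "i \<notin> col A' (\<tau> (prefix (Suc t) w))" if "Suc N \<le> t" for t
    proof -
      have e: "\<rho> t = (fst (\<rho> t), w t, fst (\<rho> (Suc t)))" using rcon[of t]
        by (metis prod.collapse)
      have s: "(fst (\<rho> t), w t, fst (\<rho> (Suc t))) \<in> safe_trans Amin" 
      proof -
        have "\<rho> t \<in> safe_trans Amin" using rsafe[of t] that by simp
        then show ?thesis using e by (metis (no_types))
      qed
      have "(fst (\<rho> t), w t, fst (\<rho> (Suc t))) \<in> comp_trans Amin (S i)" using s inv[of t] inv[of "Suc t"] that
        unfolding comp_trans_def by auto
      moreover have "\<tau> (prefix (Suc t) w) = (phi i (fst (\<rho> t)), w t, phi i (fst (\<rho> (Suc t))))"
        using that inv[of t] inv[of "Suc t"] rcon[of t] unfolding \<tau>_def \<phi>_def \<rho>_def by simp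
      ultimately have "(fst (\<rho> t), w t, fst (\<rho> (Suc t))) \<in> comp_trans Amin (S i)"
        "\<tau> (prefix (Suc t) w) = (phi i (fst (\<rho> t)), w t, phi i (fst (\<rho> (Suc t))))"
        by simp_all
      then have "\<exists>(q, a, q') \<in> comp_trans Amin (S i). (phi i q, a, phi i q') = \<tau> (prefix (Suc t) w)"
        by (intro bexI[of _ "(fst (\<rho> t), w t, fst (\<rho> (Suc t)))"]) simp_all
      then show ?thesis unfolding A'_simps(4) by simp
    qed
    then have "{t. i \<in> col A' (\<tau> (prefix (Suc t) w))} \<subseteq> {..<Suc N}" using not_le by blast
    then have "finite {t. i \<in> col A' (\<tau> (prefix (Suc t) w))}" using finite_subset by blast
    then show ?thesis unfolding accepting_def A'_simps(5) gen_coBuchi_def using iK by auto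
  qed
  have Lsup: "L \<subseteq> lang Sig A'"
  proof
    fix w assume "w \<in> L"
    then have w: "w \<in> lang Sig Amin" using langA by simp
    then have "w \<in> omega_words Sig" unfolding lang_def by blast
    then show "w \<in> lang Sig A'" unfolding lang_def using runs accs[OF w] by blast
  qed
  have "is_resolver Sig A' \<tau>"
    unfolding is_resolver_def using runs accs Lsub langA by blast
  then show ?thesis using Lsub Lsup unfolding A'_def M_def history_deterministic_def by blast
qed

end
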